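(* Let $S^A$ denote the complexity function of the family of maximal configurations resistant to altruists (in the one-dimensional Riviera model). Then for every $\rho$ with $\frac{1}{2} < \rho < \frac{2}{3}$, $$S^A(\rho) = (1 - \rho) \ln(1 - \rho) - (2\rho - 1) \ln(2\rho - 1) - (2 - 3\rho) \ln(2 - 3\rho).$$
   Context: A configuration of length $n\ge 0$ is a binary string $c_1c_2\cdots c_n$; $c_k=1$ means lot $k$ is occupied by a house, $c_k=0$ that it is empty. A house at position $k$ is blocked (from sunlight) if $2\le k\le n-1$ and $c_{k-1}=c_{k+1}=1$; lots beyond the ends of the string never obstruct sunlight. A configuration is permissible if no house is blocked. It is maximal (jammed) if it is permissible and, for every $k$ with $c_k=0$, the string obtained by setting $c_k=1$ is not permissible. A maximal configuration is resistant to altruists if, for every $k$ with $c_k=0$, in the string obtained by setting $c_k=1$ some house at a position $l\neq k$ is blocked. Let $J_{k,n}$ be the number of such configurations of length $n$ with exactly $k$ occupied lots; whenever $J_{k,n}=0$ it is redefined to be $1$. The complexity function is $S(\rho)=\sup \limsup_{i\to\infty} \frac{\ln J_{k_i,n_i}}{n_i}$, where the supremum ranges over all sequences $((k_i,n_i))_i$ of pairs of non-negative integers with $n_i\to\infty$ and $k_i/n_i\to\rho$. *)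

theory Defs
  imports "HOL-Analysis.Analysis"
begin

definition occ :: "bool list \<Rightarrow> nat \<Rightarrow> bool" where
  "occ c k \<longleftrightarrow> 1 \<le> k \<and> k \<le> length c \<and> c ! (k - 1)"

definition blocked :: "bool list \<Rightarrow> nat \<Rightarrow> bool" where
  "blocked c k \<longleftrightarrow> occ c k \<and> 2 \<le> k \<and> k + 1 \<le> length c \<and> occ c (k - 1) \<and> occ c (k + 1)"

definition permissible :: "bool list \<Rightarrow> bool" where
  "permissible c \<longleftrightarrow> (\<forall>k. \<not> blocked c k)"

definition maximal_conf :: "bool list \<Rightarrow> bool" where
  "maximal_conf c \<longleftrightarrow> permissible c \<and>
     (\<forall>k \<in> {1..length c}. \<not> occ c k \<longrightarrow> \<not> permissible (c[k - 1 := True]))"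

definition resistant :: "bool list \<Rightarrow> bool" where
  "resistant c \<longleftrightarrow> maximal_conf c \<and>
     (\<forall>k \<in> {1..length c}. \<not> occ c k \<longrightarrow> (\<exists>l. l \<noteq> k \<and> blocked (c[k - 1 := True]) l))"

definition houses :: "bool list \<Rightarrow> nat" where
  "houses c = length (filter id c)"

definition J_A :: "nat \<Rightarrow> nat \<Rightarrow> nat" where
  "J_A k n = (let m = card {c :: bool list. length c = n \<and> houses c = k \<and> resistant c}
              in if m = 0 then 1 else m)"

definition S_A :: "real \<Rightarrow> ereal" where
  "S_A \<rho> = (SUP kn \<in> {kn :: (nat \<Rightarrow> nat) \<times> (nat \<Rightarrow> nat).
                 filterlim (snd kn) at_top sequentially \<and>
                 ((\<lambda>i. real (fst kn i) / real (snd kn i)) \<longlongrightarrow> \<rho>) sequentially}.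
             limsup (\<lambda>i. ereal (ln (real (J_A (fst kn i) (snd kn i))) / real (snd kn i))))"

end

theory Submission
  imports Defs "HOL-Combinatorics.Multiset_Permutations"
begin

definition cond5 :: "bool \<Rightarrow> bool \<Rightarrow> bool \<Rightarrow> bool \<Rightarrow> bool \<Rightarrow> bool" where
  "cond5 x1 x2 x3 x4 x5 \<longleftrightarrow> \<not>(x2 \<and> x3 \<and> x4) \<and> (\<not> x3 \<longrightarrow> (x1 \<and> x2) \<or> (x4 \<and> x5))"

fun ok :: "bool list \<Rightarrow> bool" where
  "ok (x1#x2#x3#x4#x5#r) \<longleftrightarrow> cond5 x1 x2 x3 x4 x5 \<and> ok (x2#x3#x4#x5#r)"
| "ok _ \<longleftrightarrow> True"

lemma ok_nth: "ok l \<longleftrightarrow> (\<forall>i. i + 5 \<le> length l \<longrightarrow> cond5 (l!i) (l!(i+1)) (l!(i+2)) (l!(i+3)) (l!(i+4)))"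
proof (induction l rule: ok.induct)
  case (1 x1 x2 x3 x4 x5 r)
  show ?case
  proof
    assume h: "ok (x1#x2#x3#x4#x5#r)"
    show "\<forall>i. i + 5 \<le> length (x1#x2#x3#x4#x5#r) \<longrightarrow> cond5 ((x1#x2#x3#x4#x5#r)!i) ((x1#x2#x3#x4#x5#r)!(i+1)) ((x1#x2#x3#x4#x5#r)!(i+2)) ((x1#x2#x3#x4#x5#r)!(i+3)) ((x1#x2#x3#x4#x5#r)!(i+4))"
    proof (intro allI impI)
      fix i assume i: "i + 5 \<le> length (x1#x2#x3#x4#x5#r)"
      show "cond5 ((x1#x2#x3#x4#x5#r)!i) ((x1#x2#x3#x4#x5#r)!(i+1)) ((x1#x2#x3#x4#x5#r)!(i+2)) ((x1#x2#x3#x4#x5#r)!(i+3)) ((x1#x2#x3#x4#x5#r)!(i+4))"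
      proof (cases i)
        case 0 then show ?thesis using h by simp
      next
        case (Suc j)
        have "cond5 ((x2#x3#x4#x5#r)!j) ((x2#x3#x4#x5#r)!(j+1)) ((x2#x3#x4#x5#r)!(j+2)) ((x2#x3#x4#x5#r)!(j+3)) ((x2#x3#x4#x5#r)!(j+4))"
          using h 1 i Suc by auto
        then show ?thesis using Suc by (simp add: numeral_eq_Suc)
      qed
    qed
  next
    assume h: "\<forall>i. i + 5 \<le> length (x1#x2#x3#x4#x5#r) \<longrightarrow> cond5 ((x1#x2#x3#x4#x5#r)!i) ((x1#x2#x3#x4#x5#r)!(i+1)) ((x1#x2#x3#x4#x5#r)!(i+2)) ((x1#x2#x3#x4#x5#r)!(i+3)) ((x1#x2#x3#x4#x5#r)!(i+4))"
    have c: "cond5 x1 x2 x3 x4 x5" using h[rule_format, of 0] by simp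
    have "\<forall>j. j + 5 \<le> length (x2#x3#x4#x5#r) \<longrightarrow> cond5 ((x2#x3#x4#x5#r)!j) ((x2#x3#x4#x5#r)!(j+1)) ((x2#x3#x4#x5#r)!(j+2)) ((x2#x3#x4#x5#r)!(j+3)) ((x2#x3#x4#x5#r)!(j+4))"
    proof (intro allI impI)
      fix j assume "j + 5 \<le> length (x2#x3#x4#x5#r)"
      then have "cond5 ((x1#x2#x3#x4#x5#r)!(Suc j)) ((x1#x2#x3#x4#x5#r)!(Suc j+1)) ((x1#x2#x3#x4#x5#r)!(Suc j+2)) ((x1#x2#x3#x4#x5#r)!(Suc j+3)) ((x1#x2#x3#x4#x5#r)!(Suc j+4))"
        using h[rule_format, of "Suc j"] by simp
      then show "cond5 ((x2#x3#x4#x5#r)!j) ((x2#x3#x4#x5#r)!(j+1)) ((x2#x3#x4#x5#r)!(j+2)) ((x2#x3#x4#x5#r)!(j+3)) ((x2#x3#x4#x5#r)!(j+4))"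
        by (simp add: numeral_eq_Suc)
    qed
    then show "ok (x1#x2#x3#x4#x5#r)" using c 1 by simp
  qed
qed auto

definition pad :: "bool list \<Rightarrow> bool list" where
  "pad c = False # False # c @ [False, False]"

lemma pad_nth: "j < length c + 4 \<Longrightarrow> pad c ! j = occ c (j - 1)"
  unfolding pad_def occ_def
  by (cases j; cases "j - 1"; auto simp: nth_append nth_Cons')

definition loc :: "bool list \<Rightarrow> bool" where
  "loc c \<longleftrightarrow> (\<forall>k\<in>{1..length c}. cond5 (occ c (k-2)) (occ c (k-1)) (occ c k) (occ c (k+1)) (occ c (k+2)))"

lemma ok_pad: "ok (pad c) \<longleftrightarrow> loc c"
proof -
  have "ok (pad c) \<longleftrightarrow> (\<forall>i. i < length c \<longrightarrow> cond5 (pad c!i) (pad c!(i+1)) (pad c!(i+2)) (pad c!(i+3)) (pad c!(i+4)))"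
    unfolding ok_nth by (simp add: pad_def Suc_le_eq)
  also have "\<dots> \<longleftrightarrow> (\<forall>i. i < length c \<longrightarrow> cond5 (occ c (i-1)) (occ c i) (occ c (i+1)) (occ c (i+2)) (occ c (i+3)))"
  proof -
    have "\<And>i. i < length c \<Longrightarrow> pad c!i = occ c (i-1) \<and> pad c!(i+1) = occ c i \<and> pad c!(i+2) = occ c (i+1) \<and> pad c!(i+3) = occ c (i+2) \<and> pad c!(i+4) = occ c (i+3)"
      using pad_nth[of _ c] by (simp add: add.commute)
    then show ?thesis by (intro all_cong1 imp_cong refl) presburger
  qed
  also have "\<dots> \<longleftrightarrow> loc c"
    unfolding loc_def
  proof safe
    fix k assume h: "\<forall>i<length c. cond5 (occ c (i - 1)) (occ c i) (occ c (i + 1)) (occ c (i + 2)) (occ c (i + 3))"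
      and k: "k \<in> {1..length c}"
    have "k - 1 < length c" using k by auto
    then have "cond5 (occ c (k-1 - 1)) (occ c (k-1)) (occ c (k-1 + 1)) (occ c (k-1 + 2)) (occ c (k-1 + 3))"
      using h by blast
    moreover have "k-1-1 = k-2" "k-1+1 = k" "k-1+2 = k+1" "k-1+3 = k+2" using k by auto
    ultimately show "cond5 (occ c (k - 2)) (occ c (k - 1)) (occ c k) (occ c (k + 1)) (occ c (k + 2))" by simp
  next
    fix i assume h: "\<forall>k\<in>{1..length c}. cond5 (occ c (k - 2)) (occ c (k - 1)) (occ c k) (occ c (k + 1)) (occ c (k + 2))"
      and i: "i < length c"
    have "Suc i \<in> {1..length c}" using i by auto
    then have "cond5 (occ c (Suc i - 2)) (occ c (Suc i - 1)) (occ c (Suc i)) (occ c (Suc i + 1)) (occ c (Suc i + 2))"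
      using h by blast
    then show "cond5 (occ c (i - 1)) (occ c i) (occ c (i + 1)) (occ c (i + 2)) (occ c (i + 3))"
      by (simp add: numeral_eq_Suc)
  qed
  finally show ?thesis .
qed

lemma occ_out: "\<not> k \<in> {1..length c} \<Longrightarrow> \<not> occ c k"
  by (auto simp: occ_def)

lemma occ_upd: "k \<in> {1..length c} \<Longrightarrow> occ (c[k-1 := True]) j \<longleftrightarrow> (j = k \<or> occ c j)"
  by (auto simp: occ_def nth_list_update)

lemma blocked_alt: "blocked c k \<longleftrightarrow> 2 \<le> k \<and> occ c (k-1) \<and> occ c k \<and> occ c (k+1)"
  by (auto simp: blocked_def occ_def)

lemma permissible_alt: "permissible c \<longleftrightarrow> (\<forall>k\<in>{1..length c}. \<not>(occ c (k-1) \<and> occ c k \<and> occ c (k+1)))"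
  unfolding permissible_def blocked_alt
  by (auto simp: occ_def)

lemma alt_block:
  assumes p: "permissible c" and k: "k \<in> {1..length c}" and nk: "\<not> occ c k"
  shows "(\<exists>l. l \<noteq> k \<and> blocked (c[k-1 := True]) l) \<longleftrightarrow> (occ c (k-2) \<and> occ c (k-1)) \<or> (occ c (k+1) \<and> occ c (k+2))"
proof
  assume "\<exists>l. l \<noteq> k \<and> blocked (c[k-1 := True]) l"
  then obtain l where l: "l \<noteq> k" "2 \<le> l" "occ (c[k-1 := True]) (l-1)" "occ (c[k-1 := True]) l" "occ (c[k-1 := True]) (l+1)"
    unfolding blocked_alt by blast
  have ol: "occ c l" using l occ_upd[OF k] by auto
  have pb: "\<not> blocked c l" using p unfolding permissible_def by auto
  show "(occ c (k-2) \<and> occ c (k-1)) \<or> (occ c (k+1) \<and> occ c (k+2))"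
  proof (cases "l - 1 = k")
    case True
    then have "l = k + 1" using l by auto
    then show ?thesis using l(5) ol occ_upd[OF k] by auto
  next
    case False
    then have o1: "occ c (l-1)" using l(3) occ_upd[OF k] by auto
    show ?thesis
    proof (cases "l + 1 = k")
      case True
      then have "k - 2 = l - 1" "k - 1 = l" by auto
      then show ?thesis using o1 ol by auto
    next
      case False
      then have "occ c (l+1)" using l(5) occ_upd[OF k] by auto
      then have "blocked c l" using o1 ol l(2) unfolding blocked_alt by auto
      then show ?thesis using pb by auto
    qed
  qed
next
  assume h: "(occ c (k-2) \<and> occ c (k-1)) \<or> (occ c (k+1) \<and> occ c (k+2))"
  show "\<exists>l. l \<noteq> k \<and> blocked (c[k-1 := True]) l"
  proof (cases "occ c (k-2) \<and> occ c (k-1)")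
    case True
    then have "k \<ge> 3" by (auto simp: occ_def)
    then have "blocked (c[k-1 := True]) (k-1)" using True occ_upd[OF k]
      unfolding blocked_alt by (auto simp: numeral_eq_Suc)
    then show ?thesis using \<open>k \<ge> 3\<close> by (intro exI[of _ "k-1"]) auto
  next
    case False
    then have "occ c (k+1) \<and> occ c (k+2)" using h by auto
    then have "blocked (c[k-1 := True]) (k+1)" using occ_upd[OF k] k
      unfolding blocked_alt by (auto simp: numeral_eq_Suc)
    then show ?thesis by (intro exI[of _ "k+1"]) auto
  qed
qed

lemma resistant_loc: "resistant c \<longleftrightarrow> loc c"
proof
  assume r: "resistant c"
  then have p: "permissible c" unfolding resistant_def maximal_conf_def by auto
  show "loc c" unfolding loc_def cond5_def
  proof safe
    fix k assume "k \<in> {1..length c}" "occ c (k - 1)" "occ c k" "occ c (k + 1)"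
    then show False using p unfolding permissible_alt by auto
  next
    fix k assume k: "k \<in> {1..length c}" and nk: "\<not> occ c k" and n2: "\<not> occ c (k + 1)"
    have "\<exists>l. l \<noteq> k \<and> blocked (c[k-1 := True]) l" using r k nk unfolding resistant_def by auto
    then show "occ c (k-2)" using alt_block[OF p k nk] n2 by auto
  next
    fix k assume k: "k \<in> {1..length c}" and nk: "\<not> occ c k" and n2: "\<not> occ c (k + 1)"
    have "\<exists>l. l \<noteq> k \<and> blocked (c[k-1 := True]) l" using r k nk unfolding resistant_def by auto
    then show "occ c (k-1)" using alt_block[OF p k nk] n2 by auto
  next
    fix k assume k: "k \<in> {1..length c}" and nk: "\<not> occ c k" and n2: "\<not> occ c (k + 2)"
    have "\<exists>l. l \<noteq> k \<and> blocked (c[k-1 := True]) l" using r k nk unfolding resistant_def by auto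
    then show "occ c (k-2)" using alt_block[OF p k nk] n2 by auto
  next
    fix k assume k: "k \<in> {1..length c}" and nk: "\<not> occ c k" and n2: "\<not> occ c (k + 2)"
    have "\<exists>l. l \<noteq> k \<and> blocked (c[k-1 := True]) l" using r k nk unfolding resistant_def by auto
    then show "occ c (k-1)" using alt_block[OF p k nk] n2 by auto
  qed
next
  assume l: "loc c"
  have p: "permissible c" using l unfolding permissible_alt loc_def cond5_def by auto
  have q: "\<forall>k\<in>{1..length c}. \<not> occ c k \<longrightarrow> (\<exists>l. l \<noteq> k \<and> blocked (c[k-1 := True]) l)"
  proof safe
    fix k assume k: "k \<in> {1..length c}" and nk: "\<not> occ c k"
    then have "(occ c (k-2) \<and> occ c (k-1)) \<or> (occ c (k+1) \<and> occ c (k+2))"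
      using l unfolding loc_def cond5_def by auto
    then show "\<exists>l. l \<noteq> k \<and> blocked (c[k-1 := True]) l" using alt_block[OF p k nk] by auto
  qed
  have "maximal_conf c" unfolding maximal_conf_def
  proof (intro conjI p ballI impI)
    fix k assume k: "k \<in> {1..length c}" and nk: "\<not> occ c k"
    then show "\<not> permissible (c[k-1 := True])" using q unfolding permissible_def by auto
  qed
  then show "resistant c" unfolding resistant_def using q by auto
qed

lemma res_ok: "resistant c \<longleftrightarrow> ok (False # False # c @ [False, False])"
  using resistant_loc ok_pad unfolding pad_def by simp

lemma ok_shift: "ok (a # False # True # True # r) \<longleftrightarrow> ok (False # False # True # True # r)"
  by (cases r) (auto simp: cond5_def)

definition G :: "bool list \<Rightarrow> bool" where
  "G d \<longleftrightarrow> (\<exists>r. d = True # True # r) \<and> resistant d"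

lemma G_prepend:
  assumes "G d" and "p \<in> {[True,True,False], [True,True,False,True,False], [True,True,False,False]}"
  shows "G (p @ d)"
proof -
  obtain r where r: "d = True # True # r" and o: "ok (False # False # True # True # r @ [False, False])"
    using assms(1) unfolding G_def res_ok by auto
  have "ok (False # False # (p @ d) @ [False, False])"
    using assms(2) o ok_shift[of _ "r @ [False,False]"] by (auto simp: r cond5_def)
  then show ?thesis using assms(2) unfolding G_def res_ok by auto
qed

lemma G_parse:
  assumes "G d"
  shows "d \<in> {[True,True], [True,True,False], [True,True,False,True]} \<or>
    (\<exists>d'. G d' \<and> (d = [True,True,False] @ d' \<or> d = [True,True,False,True,False] @ d' \<or> d = [True,True,False,False] @ d'))"
proof -
  obtain r where r: "d = True # True # r" and o: "ok (False # False # True # True # r @ [False, False])"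
    using assms(1) unfolding G_def res_ok by auto
  show ?thesis
  proof (cases r)
    case Nil then show ?thesis using r by simp
  next
    case (Cons x r1)
    show ?thesis
    proof (cases x)
      case True then show ?thesis using o Cons by (cases r1; auto simp: cond5_def)
    next
      case False
      show ?thesis
      proof (cases r1)
        case Nil then show ?thesis using r Cons False by simp
      next
        case (Cons y r2)
        note r1 = Cons
        show ?thesis
        proof (cases y)
          case True
          show ?thesis
          proof (cases r2)
            case Nil then show ?thesis using r Cons r1 False True \<open>r = x # r1\<close> by simp
          next
            case (Cons z r3)
            show ?thesis
            proof (cases z)
              case True
              have "ok (False # False # True # True # r3 @ [False, False])"
                using o \<open>r = x # r1\<close> r1 Cons \<open>\<not> x\<close> \<open>y\<close> True ok_shift[of _ "r3 @ [False,False]"]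
                by (auto simp: cond5_def)
              then have "G (True # True # r3)" unfolding G_def res_ok by auto
              then show ?thesis using r \<open>r = x # r1\<close> r1 Cons \<open>\<not> x\<close> \<open>y\<close> True by auto
            next
              case zF: False
              obtain r4 where r4: "r3 = True # True # r4"
                using o \<open>r = x # r1\<close> r1 Cons \<open>\<not> x\<close> \<open>y\<close> zF
                by (cases r3; cases "tl r3"; auto simp: cond5_def)
              have "ok (False # False # True # True # r4 @ [False, False])"
                using o \<open>r = x # r1\<close> r1 Cons \<open>\<not> x\<close> \<open>y\<close> zF r4 ok_shift[of _ "r4 @ [False,False]"]
                by (auto simp: cond5_def)
              then have "G (True # True # r4)" unfolding G_def res_ok by auto
              then show ?thesis using r \<open>r = x # r1\<close> r1 Cons \<open>\<not> x\<close> \<open>y\<close> zF r4 by auto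
            qed
          qed
        next
          case yF: False
          obtain r4 where r4: "r2 = True # True # r4"
            using o \<open>r = x # r1\<close> r1 \<open>\<not> x\<close> yF
            by (cases r2; cases "tl r2"; auto simp: cond5_def)
          have "ok (False # False # True # True # r4 @ [False, False])"
            using o \<open>r = x # r1\<close> r1 \<open>\<not> x\<close> yF r4 ok_shift[of _ "r4 @ [False,False]"]
            by (auto simp: cond5_def)
          then have "G (True # True # r4)" unfolding G_def res_ok by auto
          then show ?thesis using r \<open>r = x # r1\<close> r1 \<open>\<not> x\<close> yF r4 by auto
        qed
      qed
    qed
  qed
qed

lemma R_parse:
  assumes "resistant c"
  shows "c \<in> {[], [True]} \<or> G c \<or> (\<exists>d. G d \<and> (c = [False] @ d \<or> c = [True, False] @ d))"
proof -
  have o: "ok (False # False # c @ [False, False])" using assms res_ok by auto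
  show ?thesis
  proof (cases c)
    case Nil then show ?thesis by simp
  next
    case (Cons x c1)
    show ?thesis
    proof (cases x)
      case True
      show ?thesis
      proof (cases c1)
        case Nil then show ?thesis using Cons True by simp
      next
        case (Cons y c2)
        show ?thesis
        proof (cases y)
          case True then show ?thesis using assms \<open>c = x # c1\<close> Cons \<open>x\<close> unfolding G_def by auto
        next
          case yF: False
          obtain c3 where c3: "c2 = True # True # c3"
            using o \<open>c = x # c1\<close> Cons \<open>x\<close> yF
            by (cases c2; cases "tl c2"; auto simp: cond5_def)
          have "ok (False # False # True # True # c3 @ [False, False])"
            using o \<open>c = x # c1\<close> Cons \<open>x\<close> yF c3 ok_shift[of _ "c3 @ [False,False]"]
            by (auto simp: cond5_def)
          then have "G (True # True # c3)" unfolding G_def res_ok by auto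
          then show ?thesis using \<open>c = x # c1\<close> Cons \<open>x\<close> yF c3 by auto
        qed
      qed
    next
      case xF: False
      obtain c3 where c3: "c1 = True # True # c3"
        using o \<open>c = x # c1\<close> xF
        by (cases c1; cases "tl c1"; auto simp: cond5_def)
      have "ok (False # False # True # True # c3 @ [False, False])"
        using o \<open>c = x # c1\<close> xF c3 ok_shift[of _ "c3 @ [False,False]"]
        by (auto simp: cond5_def)
      then have "G (True # True # c3)" unfolding G_def res_ok by auto
      then show ?thesis using \<open>c = x # c1\<close> xF c3 by auto
    qed
  qed
qed

lemma G_base: "G [True, True]"
  unfolding G_def res_ok by (simp add: cond5_def)

definition wt :: "real \<Rightarrow> real \<Rightarrow> bool list \<Rightarrow> real" where
  "wt t u c = t ^ length c * u ^ houses c"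

lemma wt_append: "wt t u (p @ d) = wt t u p * wt t u d"
  by (simp add: wt_def houses_def power_add)

lemma wt_nonneg: "t \<ge> 0 \<Longrightarrow> u \<ge> 0 \<Longrightarrow> wt t u c \<ge> 0"
  by (simp add: wt_def)

lemma finite_len: "finite {xs :: bool list. length xs = n}"
  using finite_lists_length_eq[of "UNIV :: bool set" n] by simp

lemma finite_len_P: "finite {xs :: bool list. length xs = n \<and> P xs}"
  by (rule finite_subset[OF _ finite_len[of n]]) auto

lemma sum_Un_le_real:
  assumes "finite A" "finite B" "\<And>x. f x \<ge> (0::real)"
  shows "sum f (A \<union> B) \<le> sum f A + sum f B"
proof -
  have "0 \<le> sum f (A \<inter> B)" by (intro sum_nonneg) (simp add: assms)
  then show ?thesis using sum_Un[OF assms(1,2), of f] by linarith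
qed

lemma sum_Un3_le_real:
  assumes "finite A" "finite B" "finite C" "\<And>x. f x \<ge> (0::real)"
  shows "sum f (A \<union> (B \<union> C)) \<le> sum f A + (sum f B + sum f C)"
proof -
  have "sum f (A \<union> (B \<union> C)) \<le> sum f A + sum f (B \<union> C)"
    using assms by (intro sum_Un_le_real) auto
  also have "\<dots> \<le> sum f A + (sum f B + sum f C)"
    using assms by (intro add_left_mono sum_Un_le_real) auto
  finally show ?thesis .
qed

lemma sum_image_app:
  "sum (wt t u) (((@) p) ` A) = wt t u p * sum (wt t u) A"
proof -
  have "inj_on ((@) p) A" by (auto simp: inj_on_def)
  then have "sum (wt t u) (((@) p) ` A) = sum (wt t u \<circ> ((@) p)) A" by (rule sum.reindex)
  also have "\<dots> = wt t u p * sum (wt t u) A" by (simp add: wt_append sum_distrib_left comp_def)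
  finally show ?thesis .
qed

lemma G_bound:
  fixes t u :: real
  assumes t: "t > 0" and u: "u > 0" and tu: "t^3*u^2 + t^5*u^3 + t^4*u^2 \<le> 1"
  shows "\<exists>B. \<forall>n. sum (wt t u) {d. length d = n \<and> G d} \<le> B"
proof -
  define S where "S n = sum (wt t u) {d. length d = n \<and> G d}" for n
  define B where "B = Max (S ` {..<5})"
  have S0: "S n \<ge> 0" for n unfolding S_def using t u by (intro sum_nonneg wt_nonneg) auto
  have "S 0 \<le> B" unfolding B_def by (intro Max_ge) auto
  then have B0: "B \<ge> 0" using S0[of 0] by linarith
  have "S n \<le> B" for n
  proof (induction n rule: less_induct)
    case (less n)
    show ?case
    proof (cases "n < 5")
      case True then show ?thesis unfolding B_def by (intro Max_ge) auto
    next
      case False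
      let ?A = "{d. length d = n - 3 \<and> G d}"
      let ?B = "{d. length d = n - 5 \<and> G d}"
      let ?C = "{d. length d = n - 4 \<and> G d}"
      have sub: "{d. length d = n \<and> G d} \<subseteq> ((@) [True,True,False]) ` ?A \<union> (((@) [True,True,False,True,False]) ` ?B \<union> ((@) [True,True,False,False]) ` ?C)"
      proof
        fix d assume d: "d \<in> {d. length d = n \<and> G d}"
        then have "\<not> d \<in> {[True,True], [True,True,False], [True,True,False,True]}" using False by auto
        then obtain d' where "G d'" "d = [True,True,False] @ d' \<or> d = [True,True,False,True,False] @ d' \<or> d = [True,True,False,False] @ d'"
          using G_parse[of d] d by auto
        then show "d \<in> ((@) [True,True,False]) ` ?A \<union> (((@) [True,True,False,True,False]) ` ?B \<union> ((@) [True,True,False,False]) ` ?C)"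
          using d by auto
      qed
      have fin: "finite {d. length d = m \<and> G d}" for m by (rule finite_len_P)
      have "S n \<le> sum (wt t u) (((@) [True,True,False]) ` ?A \<union> (((@) [True,True,False,True,False]) ` ?B \<union> ((@) [True,True,False,False]) ` ?C))"
        unfolding S_def using fin t u by (intro sum_mono2 sub wt_nonneg) auto
      also have "\<dots> \<le> sum (wt t u) (((@) [True,True,False]) ` ?A) + (sum (wt t u) (((@) [True,True,False,True,False]) ` ?B) + sum (wt t u) (((@) [True,True,False,False]) ` ?C))"
        using fin t u wt_nonneg by (intro sum_Un3_le_real finite_imageI) auto
      also have "\<dots> = (t^3*u^2) * S (n-3) + ((t^5*u^3) * S (n-5) + (t^4*u^2) * S (n-4))"
      proof -
        have "wt t u [True,True,False] = t^3*u^2" "wt t u [True,True,False,True,False] = t^5*u^3"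
          "wt t u [True,True,False,False] = t^4*u^2" by (simp_all add: wt_def houses_def power2_eq_square power3_eq_cube numeral_eq_Suc)
        then show ?thesis unfolding sum_image_app S_def by simp
      qed
      also have "\<dots> \<le> (t^3*u^2) * B + ((t^5*u^3) * B + (t^4*u^2) * B)"
        using less[of "n-3"] less[of "n-4"] less[of "n-5"] False t u
        by (intro add_mono mult_left_mono) auto
      also have "\<dots> = (t^3*u^2 + t^5*u^3 + t^4*u^2) * B" by (simp add: algebra_simps)
      also have "\<dots> \<le> 1 * B" using tu B0 by (intro mult_right_mono) auto
      also have "\<dots> = B" by simp
      finally show ?thesis .
    qed
  qed
  then show ?thesis unfolding S_def by blast
qed

lemma R_bound:
  fixes t u :: real
  assumes t: "t > 0" and u: "u > 0" and tu: "t^3*u^2 + t^5*u^3 + t^4*u^2 \<le> 1"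
  shows "\<exists>K>0. \<forall>n. sum (wt t u) {c. length c = n \<and> resistant c} \<le> K"
proof -
  obtain B where B: "\<And>n. sum (wt t u) {d. length d = n \<and> G d} \<le> B" using G_bound[OF assms] by blast
  have B0: "B \<ge> 0" using B[of 0] t u by (meson order.trans sum_nonneg wt_nonneg less_imp_le)
  define K where "K = 1 + t*u + B + t*B + t^2*u*B"
  have "sum (wt t u) {c. length c = n \<and> resistant c} \<le> K" for n
  proof -
    let ?A = "{d. length d = n - 1 \<and> G d}"
    let ?B = "{d. length d = n - 2 \<and> G d}"
    let ?C = "{d. length d = n \<and> G d}"
    have sub: "{c. length c = n \<and> resistant c} \<subseteq> {[], [True]} \<union> (?C \<union> (((@) [False]) ` ?A \<union> ((@) [True,False]) ` ?B))"
    proof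
      fix c assume c: "c \<in> {c. length c = n \<and> resistant c}"
      then show "c \<in> {[], [True]} \<union> (?C \<union> (((@) [False]) ` ?A \<union> ((@) [True,False]) ` ?B))"
        using R_parse[of c] by auto
    qed
    have fin: "finite {d. length d = m \<and> G d}" for m by (rule finite_len_P)
    have nn: "\<And>x. wt t u x \<ge> 0" using t u wt_nonneg by auto
    have "sum (wt t u) {c. length c = n \<and> resistant c} \<le> sum (wt t u) ({[], [True]} \<union> (?C \<union> (((@) [False]) ` ?A \<union> ((@) [True,False]) ` ?B)))"
      using fin nn by (intro sum_mono2 sub) auto
    also have "\<dots> \<le> sum (wt t u) {[], [True]} + (sum (wt t u) ?C + (sum (wt t u) (((@) [False]) ` ?A) + sum (wt t u) (((@) [True,False]) ` ?B)))"
    proof -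
      have "sum (wt t u) ({[], [True]} \<union> (?C \<union> (((@) [False]) ` ?A \<union> ((@) [True,False]) ` ?B)))
           \<le> sum (wt t u) {[], [True]} + sum (wt t u) (?C \<union> (((@) [False]) ` ?A \<union> ((@) [True,False]) ` ?B))"
        using fin nn by (intro sum_Un_le_real) auto
      also have "\<dots> \<le> sum (wt t u) {[], [True]} + (sum (wt t u) ?C + (sum (wt t u) (((@) [False]) ` ?A) + sum (wt t u) (((@) [True,False]) ` ?B)))"
        using fin nn by (intro add_left_mono sum_Un3_le_real finite_imageI) auto
      finally show ?thesis .
    qed
    also have "\<dots> = (1 + t*u) + (sum (wt t u) ?C + (t * sum (wt t u) ?A + (t^2*u) * sum (wt t u) ?B))"
    proof -
      have "wt t u [False] = t" "wt t u [True,False] = t^2*u" "sum (wt t u) {[], [True]} = 1 + t*u"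
        by (simp_all add: wt_def houses_def power2_eq_square power3_eq_cube numeral_eq_Suc)
      then show ?thesis unfolding sum_image_app by simp
    qed
    also have "\<dots> \<le> (1 + t*u) + (B + (t * B + (t^2*u) * B))"
      using B t u by (intro add_mono mult_left_mono order.refl) auto
    finally show ?thesis unfolding K_def by simp
  qed
  moreover have "K > 0" unfolding K_def using B0 t u by (simp add: add_pos_nonneg)
  ultimately show ?thesis by blast
qed

lemma count_bound:
  fixes t u :: real
  assumes t: "t > 0" and u: "u > 0" and tu: "t^3*u^2 + t^5*u^3 + t^4*u^2 \<le> 1"
  shows "\<exists>K>0. \<forall>n k. real (card {c :: bool list. length c = n \<and> houses c = k \<and> resistant c}) * (t^n * u^k) \<le> K"
proof -
  obtain K where K: "K > 0" "\<And>n. sum (wt t u) {c. length c = n \<and> resistant c} \<le> K"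
    using R_bound[OF assms] by blast
  have "real (card {c :: bool list. length c = n \<and> houses c = k \<and> resistant c}) * (t^n * u^k) \<le> K" for n k
  proof -
    have "real (card {c :: bool list. length c = n \<and> houses c = k \<and> resistant c}) * (t^n * u^k)
        = sum (wt t u) {c :: bool list. length c = n \<and> houses c = k \<and> resistant c}"
      by (simp add: wt_def)
    also have "\<dots> \<le> sum (wt t u) {c. length c = n \<and> resistant c}"
      using t u by (intro sum_mono2 finite_len_P wt_nonneg) auto
    finally show ?thesis using K(2)[of n] by simp
  qed
  then show ?thesis using K(1) by blast
qed

definition tok :: "nat \<Rightarrow> bool list" where
  "tok a = (if a = 0 then [True,True,False] else if a = 1 then [True,True,False,True,False] else [True,True,False,False])"

definition str :: "nat list \<Rightarrow> bool list" where
  "str s = concat (map tok s) @ [True, True]"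

lemma G_str: "G (str s)"
proof (induction s)
  case Nil then show ?case using G_base by (simp add: str_def)
next
  case (Cons a s)
  have "str (a # s) = tok a @ str s" by (simp add: str_def)
  moreover have "tok a \<in> {[True,True,False], [True,True,False,True,False], [True,True,False,False]}"
    by (simp add: tok_def)
  ultimately show ?case using G_prepend[OF Cons] by simp
qed

lemma tok_inj: "tok a @ True # True # x = tok b @ True # True # y \<Longrightarrow> min a 2 = min b 2 \<and> x = y"
  unfolding tok_def by (auto split: if_splits)

lemma str_hd: "\<exists>r. str s = True # True # r"
  using G_str[of s] unfolding G_def by auto

lemma str_inj: "str s = str s' \<Longrightarrow> set s \<subseteq> {0,1,2} \<Longrightarrow> set s' \<subseteq> {0,1,2} \<Longrightarrow> s = s'"
proof (induction s arbitrary: s')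
  case Nil
  show ?case
  proof (cases s')
    case (Cons b s2)
    have "str [] = [True,True]" by (simp add: str_def)
    moreover have "length (str s') \<ge> 3 + 2" using Cons by (simp add: str_def tok_def)
    ultimately show ?thesis using Nil.prems(1) by simp
  qed simp
next
  case (Cons a s)
  obtain b s'' where s': "s' = b # s''"
  proof (cases s')
    case Nil
    have "str [] = [True,True]" by (simp add: str_def)
    moreover have "length (str (a # s)) \<ge> 3 + 2" by (simp add: str_def tok_def)
    ultimately show ?thesis using Cons.prems(1) Nil by simp
  qed
  have "tok a @ str s = tok b @ str s''" using Cons.prems s' by (simp add: str_def)
  moreover obtain r1 r2 where r12: "str s = True # True # r1" "str s'' = True # True # r2" using str_hd by blast
  ultimately have eq: "tok a @ True # True # r1 = tok b @ True # True # r2" by simp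
  have "min a 2 = min b 2" "r1 = r2" using tok_inj[OF eq] by auto
  then have "min a 2 = min b 2" "str s = str s''" using r12 by auto
  moreover have "a \<le> 2" "b \<le> 2" using Cons.prems s' by auto
  ultimately have "a = b" by simp
  moreover have "s = s''" using Cons.IH[OF \<open>str s = str s''\<close>] Cons.prems s' by simp
  ultimately show ?case using s' by simp
qed

lemma length_str: "length (str s) = sum_list (map (\<lambda>x. length (tok x)) s) + 2"
  by (simp add: str_def length_concat comp_def)

lemma houses_str: "houses (str s) = sum_list (map (\<lambda>x. houses (tok x)) s) + 2"
  by (induction s) (auto simp: str_def houses_def)

definition MS :: "nat \<Rightarrow> nat \<Rightarrow> nat \<Rightarrow> nat multiset" where
  "MS e b q = replicate_mset e 0 + replicate_mset b 1 + replicate_mset q 2"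

lemma sum_list_mset: "mset s = A \<Longrightarrow> sum_list (map f s) = sum_mset (image_mset f A)"
  by (metis mset_map sum_mset_sum_list)

lemma str_params:
  assumes "s \<in> permutations_of_multiset (MS e b q)"
  shows "length (str s) = 3*e + 5*b + 4*q + 2" "houses (str s) = 2*e + 3*b + 2*q + 2"
    "set s \<subseteq> {0,1,2}"
proof -
  have m: "mset s = MS e b q" using assms by (rule permutations_of_multisetD)
  show "length (str s) = 3*e + 5*b + 4*q + 2"
    unfolding length_str sum_list_mset[OF m] by (simp add: MS_def tok_def)
  show "houses (str s) = 2*e + 3*b + 2*q + 2"
    unfolding houses_str sum_list_mset[OF m] by (simp add: MS_def tok_def houses_def)
  have "set s = set_mset (MS e b q)" using m by (metis set_mset_mset)
  then show "set s \<subseteq> {0,1,2}" by (auto simp: MS_def split: if_splits)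
qed

lemma card_MS: "card (permutations_of_multiset (MS e b q)) * (fact e * fact b * fact q) = fact (e + b + q)"
proof -
  have "(\<Prod>x\<in>set_mset (MS e b q). fact (count (MS e b q) x) :: nat) = (\<Prod>x\<in>{0,1,2::nat}. fact (count (MS e b q) x))"
    by (intro prod.mono_neutral_left) (auto simp: MS_def split: if_splits)
  also have "\<dots> = fact e * fact b * fact q" by (simp add: MS_def)
  finally have "(\<Prod>x\<in>set_mset (MS e b q). fact (count (MS e b q) x) :: nat) = fact e * fact b * fact q" .
  moreover have "size (MS e b q) = e + b + q" by (simp add: MS_def)
  ultimately show ?thesis using card_permutations_of_multiset_aux[of "MS e b q"] by simp
qed

lemma count_lower:
  "card (permutations_of_multiset (MS e b q)) \<le> card {c :: bool list. length c = 3*e + 5*b + 4*q + 2 \<and> houses c = 2*e + 3*b + 2*q + 2 \<and> resistant c}"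
proof -
  let ?P = "permutations_of_multiset (MS e b q)"
  have "inj_on str ?P" unfolding inj_on_def using str_inj str_params(3) by blast
  then have "card ?P = card (str ` ?P)" by (simp add: card_image)
  also have "\<dots> \<le> card {c :: bool list. length c = 3*e + 5*b + 4*q + 2 \<and> houses c = 2*e + 3*b + 2*q + 2 \<and> resistant c}"
    using str_params G_str unfolding G_def by (intro card_mono finite_len_P) auto
  finally show ?thesis .
qed

lemma one_plus_pow_le_exp: "(real m + 1) ^ m \<le> exp 1 * real m ^ m"
proof (cases "m = 0")
  case True then show ?thesis by simp
next
  case False
  then have "(1 + 1 / real m) ^ m \<le> exp 1" by (intro exp_ge_one_plus_x_over_n_power_n) auto
  moreover have "(real m + 1) ^ m = (1 + 1 / real m) ^ m * real m ^ m"
    using False by (simp add: field_simps flip: power_mult_distrib)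
  ultimately show ?thesis by (simp add: mult_right_mono)
qed

lemma fact_lower: "real m ^ m \<le> fact m * exp (real m)"
proof (induction m)
  case 0 then show ?case by simp
next
  case (Suc m)
  have "real (Suc m) ^ Suc m = (real m + 1) * (real m + 1) ^ m" by (simp add: add.commute)
  also have "\<dots> \<le> (real m + 1) * (exp 1 * real m ^ m)"
    by (intro mult_left_mono one_plus_pow_le_exp) auto
  also have "\<dots> \<le> (real m + 1) * (exp 1 * (fact m * exp (real m)))"
    by (intro mult_left_mono Suc.IH) auto
  also have "\<dots> = fact (Suc m) * exp (real (Suc m))"
    by (simp add: exp_add algebra_simps)
  finally show ?case .
qed

lemma exp_le_pow: "exp 1 \<le> (1 + 1 / (real n + 1)) ^ (n + 2)"
proof -
  define y where "y = 1 + 1 / (real n + 1)"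
  have y0: "y > 0" unfolding y_def by (simp add: add_pos_pos)
  have "ln (1 / y) \<le> 1 / y - 1" using y0 by (intro ln_le_minus_one) auto
  then have "ln y \<ge> 1 - 1 / y" using y0 by (simp add: ln_div)
  moreover have "1 - 1 / y = 1 / (real n + 2)" unfolding y_def by (simp add: field_simps)
  ultimately have "(real n + 2) * ln y \<ge> (real n + 2) * (1 / (real n + 2))"
    by (intro mult_left_mono) auto
  then have h: "real (n + 2) * ln y \<ge> 1" by (simp add: add.commute)
  have "exp 1 \<le> exp (real (n + 2) * ln y)" using h by simp
  also have "\<dots> = exp (ln (y ^ (n + 2)))" using y0 by (subst ln_realpow) auto
  also have "\<dots> = y ^ (n + 2)" using y0 by simp
  finally show ?thesis unfolding y_def .
qed

lemma fact_upper: "fact j * exp (real j) \<le> (real j + 1) ^ (j + 1)"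
proof (induction j)
  case 0 then show ?case by simp
next
  case (Suc j)
  have "fact (Suc j) * exp (real (Suc j)) = (real j + 1) * (fact j * exp (real j)) * exp 1"
    by (simp add: exp_add algebra_simps)
  also have "\<dots> \<le> (real j + 1) * (real j + 1) ^ (j + 1) * exp 1"
    by (intro mult_right_mono mult_left_mono Suc.IH) auto
  also have "\<dots> \<le> (real j + 1) * (real j + 1) ^ (j + 1) * (1 + 1 / (real j + 1)) ^ (j + 2)"
    by (intro mult_left_mono exp_le_pow) auto
  also have "\<dots> = ((real j + 1) * (1 + 1 / (real j + 1))) ^ (j + 2)"
    by (simp add: power_mult_distrib)
  also have "(real j + 1) * (1 + 1 / (real j + 1)) = real (Suc j) + 1"
    by (simp add: field_simps)
  finally show ?case by simp
qed

lemma ln_fact_lower: "real m * ln (real m) - real m \<le> ln (fact m)"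
proof (cases "m = 0")
  case True then show ?thesis by simp
next
  case False
  have "ln (real m ^ m) \<le> ln (fact m * exp (real m))"
    using fact_lower[of m] False by (subst ln_le_cancel_iff) auto
  then show ?thesis by (simp add: ln_realpow ln_mult)
qed

lemma ln_fact_upper: "ln (fact j) \<le> (real j + 1) * ln (real j + 1) - real j"
proof -
  have "ln (fact j * exp (real j)) \<le> ln ((real j + 1) ^ (j + 1))"
    using fact_upper[of j] by (subst ln_le_cancel_iff) auto
  moreover have "ln ((real j + 1) ^ (j + 1)) = (real j + 1) * ln (real j + 1)"
    by (subst ln_realpow) auto
  moreover have "ln (fact j * exp (real j)) = ln (fact j) + real j" by (simp add: ln_mult)
  ultimately show ?thesis by simp
qed

lemma J_pos: "J_A k n \<ge> 1"
  unfolding J_A_def Let_def by auto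

lemma J_ge_card: "real (card {c :: bool list. length c = n \<and> houses c = k \<and> resistant c}) \<le> real (J_A k n)"
  unfolding J_A_def Let_def by auto

lemma LB_count:
  "real (e+b+q) * ln (real (e+b+q)) - ((real e + 1) * ln (real e + 1) + (real b + 1) * ln (real b + 1) + (real q + 1) * ln (real q + 1))
   \<le> ln (real (J_A (2*e + 3*b + 2*q + 2) (3*e + 5*b + 4*q + 2)))"
proof -
  let ?P = "permutations_of_multiset (MS e b q)"
  have cp: "real (card ?P) * (fact e * fact b * fact q) = fact (e+b+q)"
    using card_MS[of e b q] by (metis of_nat_fact of_nat_mult)
  have cpos: "card ?P > 0" by (simp add: card_gt_0_iff)
  have "ln (fact (e+b+q) :: real) = ln (real (card ?P)) + ln (fact e) + ln (fact b) + ln (fact q)"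
    using cp[symmetric] cpos by (simp add: ln_mult)
  moreover have "ln (real (card ?P)) \<le> ln (real (J_A (2*e + 3*b + 2*q + 2) (3*e + 5*b + 4*q + 2)))"
    using cpos count_lower[of e b q] J_ge_card[of "3*e + 5*b + 4*q + 2" "2*e + 3*b + 2*q + 2"]
    by (subst ln_le_cancel_iff) auto
  moreover note ln_fact_lower[of "e+b+q"] ln_fact_upper[of e] ln_fact_upper[of b] ln_fact_upper[of q]
  ultimately show ?thesis by simp
qed

lemma upper_general:
  fixes t u \<rho> :: real and K N :: "nat \<Rightarrow> nat"
  assumes t: "t > 0" and u: "u > 0" and tu: "t^3*u^2 + t^5*u^3 + t^4*u^2 \<le> 1"
    and N: "filterlim N at_top sequentially"
    and KN: "((\<lambda>i. real (K i) / real (N i)) \<longlongrightarrow> \<rho>) sequentially"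
  shows "limsup (\<lambda>i. ereal (ln (real (J_A (K i) (N i))) / real (N i))) \<le> ereal (max 0 (- ln t - \<rho> * ln u))"
proof -
  obtain C where C: "C > 0" "\<And>n k. real (card {c :: bool list. length c = n \<and> houses c = k \<and> resistant c}) * (t^n * u^k) \<le> C"
    using count_bound[OF t u tu] by blast
  define Y where "Y i = max 0 (ln C / real (N i) - ln t - real (K i) / real (N i) * ln u)" for i
  have bound: "ln (real (J_A k n)) / real n \<le> max 0 (ln C / real n - ln t - real k / real n * ln u)" if n: "n > 0" for n k
  proof (cases "card {c :: bool list. length c = n \<and> houses c = k \<and> resistant c} = 0")
    case True
    then have "J_A k n = 1" unfolding J_A_def Let_def by simp
    then show ?thesis by simp
  next
    case False
    let ?m = "card {c :: bool list. length c = n \<and> houses c = k \<and> resistant c}"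
    have J: "J_A k n = ?m" using False unfolding J_A_def Let_def by simp
    have "ln (real ?m * (t^n * u^k)) \<le> ln C" using C(2)[of n k] C(1) False t u
      by (subst ln_le_cancel_iff) auto
    moreover have "ln (real ?m * (t^n * u^k)) = ln (real ?m) + real n * ln t + real k * ln u"
      using False t u by (simp add: ln_mult ln_realpow)
    ultimately have "ln (real ?m) \<le> ln C - real n * ln t - real k * ln u" by linarith
    then have "ln (real ?m) / real n \<le> (ln C - real n * ln t - real k * ln u) / real n"
      using n by (intro divide_right_mono) auto
    also have "\<dots> = ln C / real n - ln t - real k / real n * ln u"
      using n by (simp add: field_simps)
    finally show ?thesis using J by simp
  qed
  have ev: "eventually (\<lambda>i. N i > 0) sequentially"
  proof -
    have "eventually (\<lambda>i. 1 \<le> N i) sequentially" using N unfolding filterlim_at_top by blast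
    then show ?thesis by (rule eventually_mono) auto
  qed
  have le: "eventually (\<lambda>i. ereal (ln (real (J_A (K i) (N i))) / real (N i)) \<le> ereal (Y i)) sequentially"
    using ev by eventually_elim (unfold ereal_less_eq(3) Y_def, rule bound, simp)
  have NR: "filterlim (\<lambda>i. real (N i)) at_infinity sequentially"
    by (intro filterlim_at_top_imp_at_infinity filterlim_compose[OF filterlim_real_sequentially N])
  have "(Y \<longlongrightarrow> max 0 (0 - ln t - \<rho> * ln u)) sequentially"
    unfolding Y_def
    by (intro tendsto_max tendsto_const tendsto_diff tendsto_mult KN tendsto_divide_0[OF tendsto_const NR])
  then have "((\<lambda>i. ereal (Y i)) \<longlongrightarrow> ereal (max 0 (- ln t - \<rho> * ln u))) sequentially"
    by (simp only: lim_ereal diff_0)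
  then have "limsup (\<lambda>i. ereal (Y i)) = ereal (max 0 (- ln t - \<rho> * ln u))"
    by (intro lim_imp_Limsup) auto
  moreover have "limsup (\<lambda>i. ereal (ln (real (J_A (K i) (N i))) / real (N i))) \<le> limsup (\<lambda>i. ereal (Y i))"
    by (rule Limsup_mono[OF le])
  ultimately show ?thesis by (simp only:)
qed

lemma floor_ratio:
  fixes p :: real assumes p: "p \<ge> 0"
  shows "((\<lambda>i. real (nat \<lfloor>real i * p\<rfloor>) / real i) \<longlongrightarrow> p) sequentially"
proof (rule tendsto_sandwich[of "\<lambda>i. p - 1 / real i" _ _ "\<lambda>i. p"])
  have ev: "eventually (\<lambda>i. (i::nat) > 0) sequentially" by (rule eventually_gt_at_top)
  show "eventually (\<lambda>i. p - 1 / real i \<le> real (nat \<lfloor>real i * p\<rfloor>) / real i) sequentially"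
    using ev
  proof eventually_elim
    case (elim i)
    have "real i * p - 1 \<le> real_of_int \<lfloor>real i * p\<rfloor>" by linarith
    moreover have "real (nat \<lfloor>real i * p\<rfloor>) = real_of_int \<lfloor>real i * p\<rfloor>" using p by simp
    ultimately have "real i * p - 1 \<le> real (nat \<lfloor>real i * p\<rfloor>)" by simp
    then have "(real i * p - 1) / real i \<le> real (nat \<lfloor>real i * p\<rfloor>) / real i"
      by (intro divide_right_mono) auto
    moreover have "p - 1 / real i = (real i * p - 1) / real i" using elim by (simp add: field_simps)
    ultimately show ?case by simp
  qed
  show "eventually (\<lambda>i. real (nat \<lfloor>real i * p\<rfloor>) / real i \<le> p) sequentially"
    using ev
  proof eventually_elim
    case (elim i)
    have "real_of_int \<lfloor>real i * p\<rfloor> \<le> real i * p" by linarith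
    moreover have "real (nat \<lfloor>real i * p\<rfloor>) = real_of_int \<lfloor>real i * p\<rfloor>" using p by simp
    ultimately have "real (nat \<lfloor>real i * p\<rfloor>) \<le> real i * p" by simp
    then show ?case using elim by (simp add: field_simps)
  qed
  show "((\<lambda>i. p - 1 / real i) \<longlongrightarrow> p) sequentially"
    using tendsto_diff[OF tendsto_const lim_1_over_n, of p] by simp
qed simp

lemma xlnx_tendsto:
  fixes X :: "nat \<Rightarrow> real" assumes "(X \<longlongrightarrow> p) sequentially" "p > 0"
  shows "((\<lambda>i. X i * ln (X i)) \<longlongrightarrow> p * ln p) sequentially"
  using assms by (intro tendsto_mult tendsto_ln) auto

lemma lower_general:
  fixes p1 p2 p3 :: real
  assumes p1: "p1 > 0" and p2: "p2 > 0" and p3: "p3 > 0" and ps: "p1 + p2 + p3 = 1"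
  shows "\<exists>K N. filterlim N at_top sequentially \<and>
     ((\<lambda>i. real (K i) / real (N i)) \<longlongrightarrow> (2*p1 + 3*p2 + 2*p3) / (3*p1 + 5*p2 + 4*p3)) sequentially \<and>
     ereal (- (p1 * ln p1 + p2 * ln p2 + p3 * ln p3) / (3*p1 + 5*p2 + 4*p3))
       \<le> limsup (\<lambda>i. ereal (ln (real (J_A (K i) (N i))) / real (N i)))"
proof -
  define e where "e i = nat \<lfloor>real i * p1\<rfloor>" for i
  define b where "b i = nat \<lfloor>real i * p2\<rfloor>" for i
  define q where "q i = nat \<lfloor>real i * p3\<rfloor>" for i
  define N where "N i = 3 * e i + 5 * b i + 4 * q i + 2" for i
  define K where "K i = 2 * e i + 3 * b i + 2 * q i + 2" for i
  define \<nu> where "\<nu> = 3*p1 + 5*p2 + 4*p3"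
  define \<kappa> where "\<kappa> = 2*p1 + 3*p2 + 2*p3"
  have nu: "\<nu> > 0" unfolding \<nu>_def using p1 p2 p3 by simp
  have E: "((\<lambda>i. real (e i) / real i) \<longlongrightarrow> p1) sequentially" unfolding e_def using p1 by (intro floor_ratio) auto
  have B: "((\<lambda>i. real (b i) / real i) \<longlongrightarrow> p2) sequentially" unfolding b_def using p2 by (intro floor_ratio) auto
  have Q: "((\<lambda>i. real (q i) / real i) \<longlongrightarrow> p3) sequentially" unfolding q_def using p3 by (intro floor_ratio) auto
  have ev: "eventually (\<lambda>i. (i::nat) > 0) sequentially" by (rule eventually_gt_at_top)
  have Ni: "((\<lambda>i. real (N i) / real i) \<longlongrightarrow> \<nu>) sequentially"
  proof -
    have "((\<lambda>i. 3 * (real (e i) / real i) + 5 * (real (b i) / real i) + 4 * (real (q i) / real i) + 2 * (1 / real i)) \<longlongrightarrow> 3*p1 + 5*p2 + 4*p3 + 2 * 0) sequentially"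
      by (intro tendsto_add tendsto_mult tendsto_const E B Q lim_1_over_n)
    then have "((\<lambda>i. 3 * (real (e i) / real i) + 5 * (real (b i) / real i) + 4 * (real (q i) / real i) + 2 * (1 / real i)) \<longlongrightarrow> 3*p1 + 5*p2 + 4*p3) sequentially" by simp
    moreover have "eventually (\<lambda>i. 3 * (real (e i) / real i) + 5 * (real (b i) / real i) + 4 * (real (q i) / real i) + 2 * (1 / real i) = real (N i) / real i) sequentially"
      using ev by eventually_elim (simp add: N_def field_simps)
    ultimately show ?thesis unfolding \<nu>_def by (rule Lim_transform_eventually)
  qed
  have Ki: "((\<lambda>i. real (K i) / real i) \<longlongrightarrow> \<kappa>) sequentially"
  proof -
    have "((\<lambda>i. 2 * (real (e i) / real i) + 3 * (real (b i) / real i) + 2 * (real (q i) / real i) + 2 * (1 / real i)) \<longlongrightarrow> 2*p1 + 3*p2 + 2*p3 + 2 * 0) sequentially"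
      by (intro tendsto_add tendsto_mult tendsto_const E B Q lim_1_over_n)
    then have "((\<lambda>i. 2 * (real (e i) / real i) + 3 * (real (b i) / real i) + 2 * (real (q i) / real i) + 2 * (1 / real i)) \<longlongrightarrow> 2*p1 + 3*p2 + 2*p3) sequentially" by simp
    moreover have "eventually (\<lambda>i. 2 * (real (e i) / real i) + 3 * (real (b i) / real i) + 2 * (real (q i) / real i) + 2 * (1 / real i) = real (K i) / real i) sequentially"
      using ev by eventually_elim (simp add: K_def field_simps)
    ultimately show ?thesis unfolding \<kappa>_def by (rule Lim_transform_eventually)
  qed
  have KN: "((\<lambda>i. real (K i) / real (N i)) \<longlongrightarrow> \<kappa> / \<nu>) sequentially"
  proof -
    have "((\<lambda>i. (real (K i) / real i) / (real (N i) / real i)) \<longlongrightarrow> \<kappa> / \<nu>) sequentially"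
      using nu by (intro tendsto_divide Ki Ni) auto
    moreover have "eventually (\<lambda>i. (real (K i) / real i) / (real (N i) / real i) = real (K i) / real (N i)) sequentially"
      using ev by eventually_elim (simp add: field_simps)
    ultimately show ?thesis by (rule Lim_transform_eventually)
  qed
  have eN: "filterlim e at_top sequentially"
  proof -
    have "filterlim (\<lambda>i. real i * p1) at_top sequentially"
      using filterlim_tendsto_pos_mult_at_top[OF tendsto_const p1 filterlim_real_sequentially]
      by (simp add: mult.commute)
    then have "filterlim (\<lambda>i. \<lfloor>real i * p1\<rfloor>) at_top sequentially"
      by (rule filterlim_compose[OF filterlim_floor_sequentially])
    then show ?thesis unfolding e_def
      by (rule filterlim_compose[OF filterlim_nat_sequentially])
  qed
  have NN: "filterlim N at_top sequentially"
    by (rule filterlim_at_top_mono[OF eN]) (simp add: N_def)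
  define M where "M i = e i + b i + q i" for i
  define X where "X i = (real (M i) / real i) * ln (real (M i) / real i)
     - ((real (e i) / real i + 1 / real i) * ln (real (e i) / real i + 1 / real i)
      + (real (b i) / real i + 1 / real i) * ln (real (b i) / real i + 1 / real i)
      + (real (q i) / real i + 1 / real i) * ln (real (q i) / real i + 1 / real i))
     - 3 * (ln (real i) / real i)" for i
  have Mpos: "eventually (\<lambda>i. M i > 0) sequentially"
  proof -
    have "eventually (\<lambda>i. 1 \<le> e i) sequentially" using eN unfolding filterlim_at_top by blast
    then show ?thesis by (rule eventually_mono) (simp add: M_def)
  qed
  have low: "eventually (\<lambda>i. ereal (X i / (real (N i) / real i)) \<le> ereal (ln (real (J_A (K i) (N i))) / real (N i))) sequentially"
    using ev Mpos
  proof eventually_elim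
    case (elim i)
    let ?i = "real i"
    have id: "?i * X i = real (M i) * ln (real (M i)) - ((real (e i) + 1) * ln (real (e i) + 1) + (real (b i) + 1) * ln (real (b i) + 1) + (real (q i) + 1) * ln (real (q i) + 1))"
    proof -
      have l1: "ln (real (M i) / ?i) = ln (real (M i)) - ln ?i" using elim by (simp add: ln_div)
      have l2: "real (e i) / ?i + 1 / ?i = (real (e i) + 1) / ?i" "real (b i) / ?i + 1 / ?i = (real (b i) + 1) / ?i"
        "real (q i) / ?i + 1 / ?i = (real (q i) + 1) / ?i" by (simp_all add: add_divide_distrib)
      have l3: "ln ((real (e i) + 1) / ?i) = ln (real (e i) + 1) - ln ?i"
        "ln ((real (b i) + 1) / ?i) = ln (real (b i) + 1) - ln ?i"
        "ln ((real (q i) + 1) / ?i) = ln (real (q i) + 1) - ln ?i" using elim by (simp_all add: ln_div add_pos_nonneg)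
      show ?thesis unfolding X_def l1 l2 l3 using elim by (simp add: M_def field_simps)
    qed
    have "X i / (real (N i) / ?i) = (?i * X i) / real (N i)" using elim by (simp add: field_simps)
    also have "\<dots> \<le> ln (real (J_A (K i) (N i))) / real (N i)"
      unfolding id M_def K_def N_def
      by (intro divide_right_mono) (use LB_count[of "e i" "b i" "q i"] in auto)
    finally show ?case by simp
  qed
  define H where "H = - (p1 * ln p1 + p2 * ln p2 + p3 * ln p3)"
  have Xlim: "(X \<longlongrightarrow> H) sequentially"
  proof -
    have Mi: "((\<lambda>i. real (M i) / real i) \<longlongrightarrow> 1) sequentially"
    proof -
      have "((\<lambda>i. real (e i) / real i + real (b i) / real i + real (q i) / real i) \<longlongrightarrow> p1 + p2 + p3) sequentially"
        by (intro tendsto_add E B Q)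
      then show ?thesis using ps by (simp add: M_def add_divide_distrib)
    qed
    have E1: "((\<lambda>i. real (e i) / real i + 1 / real i) \<longlongrightarrow> p1) sequentially"
      using tendsto_add[OF E lim_1_over_n] by simp
    have B1: "((\<lambda>i. real (b i) / real i + 1 / real i) \<longlongrightarrow> p2) sequentially"
      using tendsto_add[OF B lim_1_over_n] by simp
    have Q1: "((\<lambda>i. real (q i) / real i + 1 / real i) \<longlongrightarrow> p3) sequentially"
      using tendsto_add[OF Q lim_1_over_n] by simp
    have "(X \<longlongrightarrow> 1 * ln 1 - (p1 * ln p1 + p2 * ln p2 + p3 * ln p3) - 3 * 0) sequentially"
      unfolding X_def
      by (intro tendsto_diff tendsto_add tendsto_mult tendsto_const lim_ln_over_n xlnx_tendsto Mi E1 B1 Q1 p1 p2 p3) auto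
    then show ?thesis unfolding H_def by simp
  qed
  have "((\<lambda>i. X i / (real (N i) / real i)) \<longlongrightarrow> H / \<nu>) sequentially"
    using nu by (intro tendsto_divide Xlim Ni) auto
  then have "((\<lambda>i. ereal (X i / (real (N i) / real i))) \<longlongrightarrow> ereal (H / \<nu>)) sequentially"
    by (simp only: lim_ereal)
  then have "limsup (\<lambda>i. ereal (X i / (real (N i) / real i))) = ereal (H / \<nu>)"
    by (intro lim_imp_Limsup) auto
  moreover have "limsup (\<lambda>i. ereal (X i / (real (N i) / real i))) \<le> limsup (\<lambda>i. ereal (ln (real (J_A (K i) (N i))) / real (N i)))"
    by (rule Limsup_mono[OF low])
  ultimately have "ereal (H / \<nu>) \<le> limsup (\<lambda>i. ereal (ln (real (J_A (K i) (N i))) / real (N i)))" by simp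
  then show ?thesis using NN KN unfolding H_def \<nu>_def \<kappa>_def by blast
qed

theorem mainTheorem2:
  fixes \<rho> :: real
  assumes "1/2 < \<rho>" and "\<rho> < 2/3"
  shows "S_A \<rho> = ereal ((1 - \<rho>) * ln (1 - \<rho>) - (2*\<rho> - 1) * ln (2*\<rho> - 1)
                          - (2 - 3*\<rho>) * ln (2 - 3*\<rho>))"
proof -
  define a1 where "a1 = 1 - \<rho>"
  define a2 where "a2 = 2*\<rho> - 1"
  define a3 where "a3 = 2 - 3*\<rho>"
  have a1: "a1 > 0" and a2: "a2 > 0" and a3: "a3 > 0" and a123: "a1 = a2 + a3"
    using assms by (auto simp: a1_def a2_def a3_def)
  define f where "f = a1 * ln a1 - a2 * ln a2 - a3 * ln a3"
  have fpos: "f > 0"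
  proof -
    have "f = a2 * (ln a1 - ln a2) + a3 * (ln a1 - ln a3)" unfolding f_def a123 by (simp add: algebra_simps)
    moreover have "ln a1 > ln a2" "ln a1 > ln a3" using a1 a2 a3 a123 by auto
    ultimately show ?thesis using a2 a3 by (simp add: add_pos_pos)
  qed
  define t where "t = a3^2 / (a1 * a2)"
  define u where "u = a2^2 * a1 / a3^3"
  have t: "t > 0" and u: "u > 0" using a1 a2 a3 by (auto simp: t_def u_def)
  define p1 where "p1 = a2 / a1"
  define p2 where "p2 = a2 * a3 / a1^2"
  define p3 where "p3 = a3^2 / a1^2"
  have e1: "t^3*u^2 = p1" unfolding t_def u_def p1_def using a1 a2 a3
    by (simp add: field_simps power_mult_distrib flip: power_mult) (simp add: eval_nat_numeral mult_ac)?
  have e2: "t^5*u^3 = p2" unfolding t_def u_def p2_def using a1 a2 a3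
    by (simp add: field_simps power_mult_distrib flip: power_mult) (simp add: eval_nat_numeral mult_ac)?
  have e3: "t^4*u^2 = p3" unfolding t_def u_def p3_def using a1 a2 a3
    by (simp add: field_simps power_mult_distrib flip: power_mult) (simp add: eval_nat_numeral mult_ac)?
  have psum: "p1 + p2 + p3 = 1"
  proof -
    have "p1 + p2 + p3 = (a2*a1 + a2*a3 + a3^2)/a1^2" unfolding p1_def p2_def p3_def using a1
      by (simp add: field_simps power2_eq_square)
    moreover have "a2*a1 + a2*a3 + a3^2 = a1^2" unfolding a123 by (simp add: power2_eq_square algebra_simps)
    ultimately show ?thesis using a1 by simp
  qed
  have pp1: "p1 > 0" and pp2: "p2 > 0" and pp3: "p3 > 0" unfolding p1_def p2_def p3_def using a1 a2 a3 by auto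
  have tu: "t^3*u^2 + t^5*u^3 + t^4*u^2 \<le> 1" using e1 e2 e3 psum by simp
  have lnt: "ln t = 2 * ln a3 - ln a1 - ln a2" unfolding t_def using a1 a2 a3
    by (simp add: ln_div ln_mult ln_realpow)
  have lnu: "ln u = 2 * ln a2 + ln a1 - 3 * ln a3" unfolding u_def using a1 a2 a3
    by (simp add: ln_div ln_mult ln_realpow)
  have feq: "- ln t - \<rho> * ln u = f"
    unfolding lnt lnu f_def a1_def a2_def a3_def by (simp add: algebra_simps)
  define \<nu> where "\<nu> = 3*p1 + 5*p2 + 4*p3"
  define \<kappa> where "\<kappa> = 2*p1 + 3*p2 + 2*p3"
  have nu: "\<nu> > 0" unfolding \<nu>_def using pp1 pp2 pp3 by simp
  have kn: "\<kappa> / \<nu> = \<rho>"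
  proof -
    have k1: "\<kappa> * a1^2 = 2*a2*a1 + 3*a2*a3 + 2*a3^2"
      unfolding \<kappa>_def p1_def p2_def p3_def using a1 by (simp add: field_simps power2_eq_square)
    have n1: "\<nu> * a1^2 = 3*a2*a1 + 5*a2*a3 + 4*a3^2"
      unfolding \<nu>_def p1_def p2_def p3_def using a1 by (simp add: field_simps power2_eq_square)
    have r1: "2*a2*a1 + 3*a2*a3 + 2*a3^2 = \<rho> * (3*a2*a1 + 5*a2*a3 + 4*a3^2)"
      unfolding a1_def a2_def a3_def by (simp add: algebra_simps power2_eq_square)
    have "\<kappa> * a1^2 = \<rho> * (\<nu> * a1^2)" using k1 n1 r1 by simp
    then have "\<kappa> = \<rho> * \<nu>" using a1 by simp
    then show ?thesis using nu by simp
  qed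
  have Heq: "- (p1 * ln p1 + p2 * ln p2 + p3 * ln p3) / \<nu> = f"
  proof -
    have l1: "ln p1 = 3 * ln t + 2 * ln u" unfolding e1[symmetric] using t u by (simp add: ln_mult ln_realpow)
    have l2: "ln p2 = 5 * ln t + 3 * ln u" unfolding e2[symmetric] using t u by (simp add: ln_mult ln_realpow)
    have l3: "ln p3 = 4 * ln t + 2 * ln u" unfolding e3[symmetric] using t u by (simp add: ln_mult ln_realpow)
    have "- (p1 * ln p1 + p2 * ln p2 + p3 * ln p3) = \<nu> * (- ln t) - \<kappa> * ln u"
      unfolding l1 l2 l3 \<nu>_def \<kappa>_def by (simp add: algebra_simps)
    then have "- (p1 * ln p1 + p2 * ln p2 + p3 * ln p3) / \<nu> = - ln t - (\<kappa> / \<nu>) * ln u"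
      using nu by (simp add: field_simps)
    then show ?thesis using kn feq by simp
  qed
  have target: "(1 - \<rho>) * ln (1 - \<rho>) - (2*\<rho> - 1) * ln (2*\<rho> - 1) - (2 - 3*\<rho>) * ln (2 - 3*\<rho>) = f"
    unfolding f_def a1_def a2_def a3_def by simp
  define Sset where "Sset = {kn :: (nat \<Rightarrow> nat) \<times> (nat \<Rightarrow> nat).
                 filterlim (snd kn) at_top sequentially \<and>
                 ((\<lambda>i. real (fst kn i) / real (snd kn i)) \<longlongrightarrow> \<rho>) sequentially}"
  have SA: "S_A \<rho> = (SUP kn \<in> Sset. limsup (\<lambda>i. ereal (ln (real (J_A (fst kn i) (snd kn i))) / real (snd kn i))))"
    unfolding S_A_def Sset_def by simp
  have up: "S_A \<rho> \<le> ereal f"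
    unfolding SA
  proof (rule SUP_least)
    fix kn assume "kn \<in> Sset"
    then have N: "filterlim (snd kn) at_top sequentially"
      and KN: "((\<lambda>i. real (fst kn i) / real (snd kn i)) \<longlongrightarrow> \<rho>) sequentially" unfolding Sset_def by auto
    have "limsup (\<lambda>i. ereal (ln (real (J_A (fst kn i) (snd kn i))) / real (snd kn i))) \<le> ereal (max 0 (- ln t - \<rho> * ln u))"
      by (rule upper_general[OF t u tu N KN])
    also have "max 0 (- ln t - \<rho> * ln u) = f" using feq fpos by simp
    finally show "limsup (\<lambda>i. ereal (ln (real (J_A (fst kn i) (snd kn i))) / real (snd kn i))) \<le> ereal f" .
  qed
  obtain K N where N: "filterlim N at_top sequentially"
    and KN: "((\<lambda>i. real (K i) / real (N i)) \<longlongrightarrow> (2*p1 + 3*p2 + 2*p3) / (3*p1 + 5*p2 + 4*p3)) sequentially"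
    and L: "ereal (- (p1 * ln p1 + p2 * ln p2 + p3 * ln p3) / (3*p1 + 5*p2 + 4*p3))
       \<le> limsup (\<lambda>i. ereal (ln (real (J_A (K i) (N i))) / real (N i)))"
    using lower_general[OF pp1 pp2 pp3 psum] by blast
  have "(K, N) \<in> Sset" unfolding Sset_def using N KN kn unfolding \<kappa>_def \<nu>_def by auto
  moreover have "ereal f \<le> limsup (\<lambda>i. ereal (ln (real (J_A (fst (K, N) i) (snd (K, N) i))) / real (snd (K, N) i)))"
    using L Heq unfolding \<nu>_def by simp
  ultimately have low: "ereal f \<le> S_A \<rho>" unfolding SA by (rule SUP_upper2)
  show ?thesis using up low target by simp
qed

end
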